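(* Let $F_{ij}$ ($0\le i\le m$, $0\le j\le n$) be a dual-convex $m\times n$ net in $I^3$. A collection of points $G_{ij}$ is a velocity diagram of $F_{ij}$ if and only if $G_{ij}$ is an $m\times n$ net which is v-parallel to $F_{ij}$, is not contained in a single plane, and has vanishing mixed curvature with $F_{ij}$ at all pairs of corresponding vertices.
   Context: $I^3$ is $\mathbb{R}^3$ with coordinates $(x,y,z)$; isotropic = parallel to the $z$-axis; top view $\overline P$ of $P=(x,y,z)$ is $(x,y)$ (also identified with $(x,y,0)$). Metric duality: point $P=(P^1,P^2,P^3)\leftrightarrow$ plane $P^*\colon z=P^1x+P^2y-P^3$. Infinitesimal isotropic congruence: vector field $V(\mathbf x)=a\mathbf x+\mathbf b$, $\mathbf b\in\mathbb R^3$, $a=\begin{pmatrix}0&-\phi&0\\ \phi&0&0\\ c_1&c_2&0\end{pmatrix}$. An $m\times n$ net: points $F_{ij}$, $0\le i\le m,0\le j\le n$, with $F_{ij},F_{i+1,j},F_{i+1,j+1},F_{i,j+1}$ consecutive vertices of a convex planar quadrilateral (face $p_{ij}$) for all $0\le i<m,0\le j<n$. Boundary vertices: $i\in\{0,m\}$ or $j\in\{0,n\}$; consecutive faces around non-boundary $F_{ij}$: $p_{i-1,j-1},p_{i,j-1},p_{ij},p_{i-1,j}$. Convex 4-hedral angle, flat angles, admissible (isotropic line through the vertex meets the interior); dual-convex: $m,n\ge2$ and at each non-boundary vertex the four consecutive face planes are planes of four consecutive flat angles of an admissible convex 4-hedral angle. Two nets are v-parallel if vertices with equal indices have equal top views.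 Curvature at a non-boundary vertex with consecutive faces $p_1..p_4$: oriented area $\Omega=\frac12\sum_{k=1}^4\det(\overline{p_k^*},\overline{p_{k+1}^*})$ ($p_5=p_1$) of the closed broken line $\overline{p_1^*}\,\overline{p_2^*}\,\overline{p_3^*}\,\overline{p_4^*}$ (top view of the isotropic Gauss image). Mixed area of plane closed broken lines $ABCD$, $A'B'C'D'$: $\frac{d}{dt}|_{t=0}\mathrm{Area}((A+tA')(B+tB')(C+tC')(D+tD'))$. Mixed curvature of corresponding non-boundary vertices of two v-parallel nets: mixed area of the top views of their isotropic Gauss images; at boundary vertices it is defined to be $0$. Infinitesimal isotropic isometric deformation of dual-convex $F_{ij}$: vectors $V_{ij}$ such that for each face there is an infinitesimal isotropic congruence $V$ with $V_{ij}=V(F_{ij})$ at its four vertices, and $\frac{d}{dt}\Omega(F_{ij}+tV_{ij})|_{t=0}=0$ at each non-boundary vertex; trivial if a single $V$ works for all vertices. A velocity diagram of $F_{ij}$ is the collection $\overline{F_{ij}}+V_{ij}$, where $V_{ij}$ is a nontrivial infinitesimal isotropic isometric deformation of $F_{ij}$ consisting of vectors parallel to the $z$-axis. *)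

theory Defs
  imports "HOL-Analysis.Analysis"
begin

type_synonym pt = "real^3"
type_synonym net = "nat \<Rightarrow> nat \<Rightarrow> pt"

definition convex_quad :: "pt \<Rightarrow> pt \<Rightarrow> pt \<Rightarrow> pt \<Rightarrow> bool" where
  "convex_quad A B C D \<longleftrightarrow>
     \<not> collinear {A, B, C, D} \<and> open_segment A C \<inter> open_segment B D \<noteq> {}"

definition is_net :: "nat \<Rightarrow> nat \<Rightarrow> net \<Rightarrow> bool" where
  "is_net m n F \<longleftrightarrow> (\<forall>i j. i < m \<longrightarrow> j < n \<longrightarrow>
     convex_quad (F i j) (F (Suc i) j) (F (Suc i) (Suc j)) (F i (Suc j)))"

definition face_plane :: "net \<Rightarrow> nat \<Rightarrow> nat \<Rightarrow> pt set" where
  "face_plane F i j = affine hull {F i j, F (Suc i) j, F (Suc i) (Suc j), F i (Suc j)}"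

definition boundary_vertex :: "nat \<Rightarrow> nat \<Rightarrow> nat \<Rightarrow> nat \<Rightarrow> bool" where
  "boundary_vertex m n i j \<longleftrightarrow> i = 0 \<or> i = m \<or> j = 0 \<or> j = n"

text \<open>Convex 4-hedral angle with vertex Q and edge directions e1..e4 in cyclic order:
  the plane through each pair of consecutive edges leaves the other two edges strictly on
  one side.\<close>
definition supp_pair :: "pt \<Rightarrow> pt \<Rightarrow> pt \<Rightarrow> pt \<Rightarrow> bool" where
  "supp_pair a b c d \<longleftrightarrow> (\<exists>\<nu>::pt. \<nu> \<bullet> a = 0 \<and> \<nu> \<bullet> b = 0 \<and> \<nu> \<bullet> c > 0 \<and> \<nu> \<bullet> d > 0)"

definition convex_4hedral :: "pt \<Rightarrow> pt \<Rightarrow> pt \<Rightarrow> pt \<Rightarrow> bool" where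
  "convex_4hedral e1 e2 e3 e4 \<longleftrightarrow>
     supp_pair e1 e2 e3 e4 \<and> supp_pair e2 e3 e4 e1 \<and> supp_pair e3 e4 e1 e2 \<and> supp_pair e4 e1 e2 e3"

definition angle_solid :: "pt \<Rightarrow> pt \<Rightarrow> pt \<Rightarrow> pt \<Rightarrow> pt \<Rightarrow> pt set" where
  "angle_solid Q e1 e2 e3 e4 = {Q + (a *\<^sub>R e1 + b *\<^sub>R e2 + c *\<^sub>R e3 + d *\<^sub>R e4) | a b c d.
      a \<ge> 0 \<and> b \<ge> 0 \<and> c \<ge> 0 \<and> d \<ge> 0}"

definition admissible_4hedral :: "pt \<Rightarrow> pt \<Rightarrow> pt \<Rightarrow> pt \<Rightarrow> pt \<Rightarrow> bool" where
  "admissible_4hedral Q e1 e2 e3 e4 \<longleftrightarrow>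
     (\<exists>s::real. Q + s *\<^sub>R axis 3 1 \<in> interior (angle_solid Q e1 e2 e3 e4))"

definition flat_plane :: "pt \<Rightarrow> pt \<Rightarrow> pt \<Rightarrow> pt set" where
  "flat_plane Q e e' = affine hull {Q, Q + e, Q + e'}"

definition dual_convex :: "nat \<Rightarrow> nat \<Rightarrow> net \<Rightarrow> bool" where
  "dual_convex m n F \<longleftrightarrow> m \<ge> 2 \<and> n \<ge> 2 \<and>
     (\<forall>i j. 1 \<le> i \<longrightarrow> i < m \<longrightarrow> 1 \<le> j \<longrightarrow> j < n \<longrightarrow>
        (\<exists>Q e1 e2 e3 e4. convex_4hedral e1 e2 e3 e4 \<and> admissible_4hedral Q e1 e2 e3 e4 \<and>
           flat_plane Q e1 e2 = face_plane F (i - 1) (j - 1) \<and>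
           flat_plane Q e2 e3 = face_plane F i (j - 1) \<and>
           flat_plane Q e3 e4 = face_plane F i j \<and>
           flat_plane Q e4 e1 = face_plane F (i - 1) j))"

definition dual_pt :: "pt set \<Rightarrow> pt" where
  "dual_pt P = (THE q::pt. P = {x. x$3 = q$1 * x$1 + q$2 * x$2 - q$3})"

text \<open>Top view of the isotropic Gauss image of face p_ij.\<close>
definition gauss_top :: "net \<Rightarrow> nat \<Rightarrow> nat \<Rightarrow> real \<times> real" where
  "gauss_top F i j = (let q = dual_pt (face_plane F i j) in (q$1, q$2))"

definition det2 :: "real \<times> real \<Rightarrow> real \<times> real \<Rightarrow> real" where
  "det2 a b = fst a * snd b - snd a * fst b"

definition area4 :: "real \<times> real \<Rightarrow> real \<times> real \<Rightarrow> real \<times> real \<Rightarrow> real \<times> real \<Rightarrow> real" where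
  "area4 A B C D = (det2 A B + det2 B C + det2 C D + det2 D A) / 2"

definition mixed_area ::
  "real \<times> real \<Rightarrow> real \<times> real \<Rightarrow> real \<times> real \<Rightarrow> real \<times> real \<Rightarrow>
   real \<times> real \<Rightarrow> real \<times> real \<Rightarrow> real \<times> real \<Rightarrow> real \<times> real \<Rightarrow> real" where
  "mixed_area A B C D A' B' C' D' =
     deriv (\<lambda>t. area4 (A + t *\<^sub>R A') (B + t *\<^sub>R B') (C + t *\<^sub>R C') (D + t *\<^sub>R D')) 0"

definition curvature :: "net \<Rightarrow> nat \<Rightarrow> nat \<Rightarrow> real" where
  "curvature F i j = area4 (gauss_top F (i - 1) (j - 1)) (gauss_top F i (j - 1))
                           (gauss_top F i j) (gauss_top F (i - 1) j)"

definition mixed_curvature :: "nat \<Rightarrow> nat \<Rightarrow> net \<Rightarrow> net \<Rightarrow> nat \<Rightarrow> nat \<Rightarrow> real" where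
  "mixed_curvature m n F G i j =
     (if boundary_vertex m n i j then 0
      else mixed_area
        (gauss_top F (i - 1) (j - 1)) (gauss_top F i (j - 1)) (gauss_top F i j) (gauss_top F (i - 1) j)
        (gauss_top G (i - 1) (j - 1)) (gauss_top G i (j - 1)) (gauss_top G i j) (gauss_top G (i - 1) j))"

definition iso_cong :: "real \<Rightarrow> real \<Rightarrow> real \<Rightarrow> pt \<Rightarrow> pt \<Rightarrow> pt" where
  "iso_cong \<phi> c1 c2 b x =
     vector [- \<phi> * x$2, \<phi> * x$1, c1 * x$1 + c2 * x$2] + b"

definition inf_iso_isometric :: "nat \<Rightarrow> nat \<Rightarrow> net \<Rightarrow> net \<Rightarrow> bool" where
  "inf_iso_isometric m n F V \<longleftrightarrow>
     (\<forall>i j. i < m \<longrightarrow> j < n \<longrightarrow>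
        (\<exists>\<phi> c1 c2 b. V i j = iso_cong \<phi> c1 c2 b (F i j) \<and>
            V (Suc i) j = iso_cong \<phi> c1 c2 b (F (Suc i) j) \<and>
            V (Suc i) (Suc j) = iso_cong \<phi> c1 c2 b (F (Suc i) (Suc j)) \<and>
            V i (Suc j) = iso_cong \<phi> c1 c2 b (F i (Suc j)))) \<and>
     (\<forall>i j. i \<le> m \<longrightarrow> j \<le> n \<longrightarrow> \<not> boundary_vertex m n i j \<longrightarrow>
        ((\<lambda>t. curvature (\<lambda>k l. F k l + t *\<^sub>R V k l) i j) has_real_derivative 0) (at 0))"

definition trivial_deformation :: "nat \<Rightarrow> nat \<Rightarrow> net \<Rightarrow> net \<Rightarrow> bool" where
  "trivial_deformation m n F V \<longleftrightarrow>
     (\<exists>\<phi> c1 c2 b. \<forall>i j. i \<le> m \<longrightarrow> j \<le> n \<longrightarrow> V i j = iso_cong \<phi> c1 c2 b (F i j))"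

definition velocity_diagram :: "nat \<Rightarrow> nat \<Rightarrow> net \<Rightarrow> net \<Rightarrow> bool" where
  "velocity_diagram m n F G \<longleftrightarrow>
     (\<exists>V. inf_iso_isometric m n F V \<and> \<not> trivial_deformation m n F V \<and>
        (\<forall>i j. i \<le> m \<longrightarrow> j \<le> n \<longrightarrow> V i j $ 1 = 0 \<and> V i j $ 2 = 0) \<and>
        (\<forall>i j. i \<le> m \<longrightarrow> j \<le> n \<longrightarrow>
           G i j = vector [F i j $ 1, F i j $ 2, 0] + V i j))"

definition v_parallel :: "nat \<Rightarrow> nat \<Rightarrow> net \<Rightarrow> net \<Rightarrow> bool" where
  "v_parallel m n F G \<longleftrightarrow>
     (\<forall>i j. i \<le> m \<longrightarrow> j \<le> n \<longrightarrow> G i j $ 1 = F i j $ 1 \<and> G i j $ 2 = F i j $ 2)"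

end

theory Submission
  imports Defs
begin

definition onp :: "real \<Rightarrow> real \<Rightarrow> real \<Rightarrow> pt \<Rightarrow> bool" where
  "onp a b c X \<longleftrightarrow> X$3 = a * X$1 + b * X$2 + c"

definition tcol :: "pt set \<Rightarrow> bool" where
  "tcol S \<longleftrightarrow> (\<exists>\<alpha> \<beta> \<delta>. (\<alpha> \<noteq> 0 \<or> \<beta> \<noteq> 0) \<and> (\<forall>X\<in>S. \<alpha> * X$1 + \<beta> * X$2 = \<delta>))"

definition sh :: "real \<Rightarrow> real \<Rightarrow> real \<Rightarrow> pt \<Rightarrow> pt" where
  "sh a b c x = vector [x$1, x$2, x$3 + a * x$1 + b * x$2 + c]"

lemma inner3: "(\<nu>::pt) \<bullet> x = \<nu>$1 * x$1 + \<nu>$2 * x$2 + \<nu>$3 * x$3"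
  by (simp add: inner_vec_def sum_3)

lemma vec3_eq: "(x::pt) = y \<longleftrightarrow> x$1 = y$1 \<and> x$2 = y$2 \<and> x$3 = y$3"
  by (simp add: vec_eq_iff forall_3)

lemma sh_inv: "sh (-a) (-b) (-c) (sh a b c x) = x"
  by (simp add: sh_def vec3_eq)

lemma sh_comb: "sh a b c ((1 - u) *\<^sub>R x + u *\<^sub>R y) = (1 - u) *\<^sub>R sh a b c x + u *\<^sub>R sh a b c y"
  by (simp add: sh_def vec3_eq algebra_simps)

lemma sh_inj: "sh a b c x = sh a b c y \<Longrightarrow> x = y"
  by (metis sh_inv)

lemma sh_collinear: assumes "collinear S" shows "collinear (sh a b c ` S)"
proof -
  obtain u v where uv: "\<forall>x\<in>S. \<exists>k. x = u + k *\<^sub>R v" using assms collinear_alt by blast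
  have "\<forall>y\<in>sh a b c ` S. \<exists>k. y = sh a b c u + k *\<^sub>R (vector [v$1, v$2, v$3 + a * v$1 + b * v$2])"
  proof
    fix y assume "y \<in> sh a b c ` S"
    then obtain x where x: "x \<in> S" "y = sh a b c x" by auto
    then obtain k where "x = u + k *\<^sub>R v" using uv by blast
    then show "\<exists>k. y = sh a b c u + k *\<^sub>R (vector [v$1, v$2, v$3 + a * v$1 + b * v$2])"
      using x by (intro exI[of _ k]) (simp add: sh_def vec3_eq algebra_simps)
  qed
  then show ?thesis unfolding collinear_alt by blast
qed

lemma sh_noncollinear: assumes "\<not> collinear S" shows "\<not> collinear (sh a b c ` S)"
proof
  assume "collinear (sh a b c ` S)"
  then have "collinear (sh (-a) (-b) (-c) ` sh a b c ` S)" by (rule sh_collinear)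
  moreover have "sh (-a) (-b) (-c) ` sh a b c ` S = S" by (force simp: image_image sh_inv)
  ultimately show False using assms by simp
qed

lemma sh_open_segment: "p \<in> open_segment x y \<Longrightarrow> sh a b c p \<in> open_segment (sh a b c x) (sh a b c y)"
  by (auto simp: in_segment sh_comb dest: sh_inj)

lemma sh_convex_quad: assumes "convex_quad A B C D"
  shows "convex_quad (sh a b c A) (sh a b c B) (sh a b c C) (sh a b c D)"
proof -
  have 1: "\<not> collinear {A,B,C,D}" and "open_segment A C \<inter> open_segment B D \<noteq> {}"
    using assms by (auto simp: convex_quad_def)
  then obtain p where "p \<in> open_segment A C" "p \<in> open_segment B D" by blast
  then have "sh a b c p \<in> open_segment (sh a b c A) (sh a b c C) \<inter> open_segment (sh a b c B) (sh a b c D)"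
    by (simp add: sh_open_segment)
  moreover have "\<not> collinear {sh a b c A, sh a b c B, sh a b c C, sh a b c D}"
    using sh_noncollinear[OF 1, of a b c] by simp
  ultimately show ?thesis by (auto simp: convex_quad_def)
qed

lemma sh_match: assumes "Y$1 = X$1" "Y$2 = X$2" "onp a b c X" "onp a' b' c' Y"
  shows "Y = sh (a'-a) (b'-b) (c'-c) X"
  using assms by (simp add: sh_def vec3_eq onp_def algebra_simps)

lemma tcol_collinear: assumes "\<forall>X\<in>S. onp a b c X" "tcol S" shows "collinear S"
proof -
  obtain \<alpha> \<beta> \<delta> where ab: "\<alpha> \<noteq> 0 \<or> \<beta> \<noteq> 0" and l: "\<forall>X\<in>S. \<alpha> * X$1 + \<beta> * X$2 = \<delta>"
    using assms(2) tcol_def by auto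
  let ?u = "vector [- \<beta>, \<alpha>, - a * \<beta> + b * \<alpha>] :: pt"
  have "\<forall>x\<in>S. \<forall>y\<in>S. \<exists>k. x - y = k *\<^sub>R ?u"
  proof (intro ballI)
    fix x y assume x: "x \<in> S" and y: "y \<in> S"
    have e: "\<alpha> * (x$1 - y$1) + \<beta> * (x$2 - y$2) = 0" using l x y by (auto simp: algebra_simps)
    have z: "x$3 - y$3 = a * (x$1 - y$1) + b * (x$2 - y$2)" using assms(1) x y by (auto simp: onp_def algebra_simps)
    show "\<exists>k. x - y = k *\<^sub>R ?u"
    proof (cases "\<alpha> = 0")
      case True
      then have "\<beta> \<noteq> 0" using ab by simp
      then have "x$2 - y$2 = 0" using e True by simp
      then have z': "x$3 = y$3 + a * (x$1 - y$1)" "x$2 = y$2" using z by auto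
      then show ?thesis using True \<open>\<beta> \<noteq> 0\<close>
        by (intro exI[of _ "-(x$1 - y$1)/\<beta>"]) (simp add: vec3_eq field_simps, metis distrib_left)
    next
      case False
      define k where "k = (x$2 - y$2)/\<alpha>"
      have c1: "x$1 - y$1 = k * (- \<beta>)" using e False unfolding k_def by (simp add: field_simps)
      have c2: "x$2 - y$2 = k * \<alpha>" using False unfolding k_def by simp
      have c3: "x$3 - y$3 = k * (- a * \<beta> + b * \<alpha>)" unfolding z
        by (subst c1, subst c2) (simp add: algebra_simps)
      have "x - y = k *\<^sub>R ?u" unfolding vec3_eq using c1 c2 c3 by simp
      then show ?thesis by blast
    qed
  qed
  then show ?thesis unfolding collinear_def by blast
qed


lemma onp_hyper: "{x. onp a b c x} = {x. (vector [-a, -b, 1] :: pt) \<bullet> x = c}"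
  by (auto simp: onp_def inner3)

lemma plane_hull: assumes nc: "\<not> collinear S" and on: "\<forall>X\<in>S. onp a b c X"
  shows "affine hull S = {x. onp a b c x}"
proof -
  have nz: "(vector [-a, -b, 1] :: pt) \<noteq> 0" by (simp add: vec3_eq)
  have sub: "affine hull S \<subseteq> {x. onp a b c x}"
    unfolding onp_hyper apply (rule hull_minimal) using on apply (auto simp: onp_def inner3)[1] by (rule affine_hyperplane)
  have "S \<noteq> {}" using nc by auto
  moreover have "aff_dim (affine hull S) = aff_dim {x. onp a b c x}"
  proof -
    have "aff_dim {x. onp a b c x} = 2" unfolding onp_hyper using nz by simp
    moreover have "aff_dim (affine hull S) \<le> aff_dim {x. onp a b c x}" using sub aff_dim_subset by blast
    moreover have "aff_dim (affine hull S) > 1" using nc by (simp add: collinear_aff_dim)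
    ultimately show ?thesis by linarith
  qed
  ultimately show ?thesis
    by (intro affine_dim_equal sub) (auto simp: onp_hyper affine_hyperplane)
qed

lemma dual_onp: "dual_pt {x. onp a b c x} = vector [a, b, -c]"
  unfolding dual_pt_def
proof (rule the_equality)
  show "{x. onp a b c x} = {x. x $ 3 = (vector [a, b, - c]::pt) $ 1 * x $ 1 + (vector [a, b, - c]::pt) $ 2 * x $ 2 - (vector [a, b, - c]::pt) $ 3}"
    by (auto simp: onp_def)
next
  fix q :: pt assume q: "{x. onp a b c x} = {x. x $ 3 = q $ 1 * x $ 1 + q $ 2 * x $ 2 - q $ 3}"
  have h: "\<And>x::pt. x$3 = a * x$1 + b * x$2 + c \<longleftrightarrow> x $ 3 = q $ 1 * x $ 1 + q $ 2 * x $ 2 - q $ 3"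
    using q by (auto simp: onp_def set_eq_iff)
  have 1: "c = - q$3" using h[of "vector [0,0,c]"] by simp
  have 2: "a + c = q$1 - q$3" using h[of "vector [1,0,a+c]"] by simp
  have 3: "b + c = q$2 - q$3" using h[of "vector [0,1,b+c]"] by simp
  show "q = vector [a, b, - c]" using 1 2 3 by (simp add: vec3_eq)
qed

definition fv :: "net \<Rightarrow> nat \<Rightarrow> nat \<Rightarrow> pt set" where
  "fv H i j = {H i j, H (Suc i) j, H (Suc i) (Suc j), H i (Suc j)}"

lemma gauss_onp: assumes "\<not> collinear (fv H i j)" "\<forall>X\<in>fv H i j. onp a b c X"
  shows "gauss_top H i j = (a, b)"
proof -
  have "face_plane H i j = {x. onp a b c x}"
    using plane_hull[OF assms] by (simp add: face_plane_def fv_def)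
  then show ?thesis by (simp add: gauss_top_def dual_onp)
qed

lemma coplanar_onp: assumes "coplanar S" "\<not> tcol S" shows "\<exists>a b c. \<forall>X\<in>S. onp a b c X"
proof -
  obtain u v w where "S \<subseteq> affine hull {u,v,w}" using assms(1) coplanar_def by blast
  then have "aff_dim S \<le> aff_dim {u,v,w}"
    by (metis aff_dim_affine_hull aff_dim_subset)
  also have "\<dots> \<le> int (card {u,v,w}) - 1" by (rule aff_dim_le_card) simp
  also have "\<dots> \<le> 2" by (simp add: card_insert_if)
  finally have "aff_dim S < int DIM(pt)" by simp
  then obtain \<nu> d where nz: "(\<nu>::pt) \<noteq> 0" and sub: "S \<subseteq> {x. \<nu> \<bullet> x = d}"
    by (rule aff_lowdim_subset_hyperplane)
  show ?thesis
  proof (cases "\<nu>$3 = 0")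
    case True
    then have "\<nu>$1 \<noteq> 0 \<or> \<nu>$2 \<noteq> 0" using nz by (auto simp: vec3_eq)
    then have "tcol S" unfolding tcol_def using sub True
      by (intro exI[of _ "\<nu>$1"] exI[of _ "\<nu>$2"] exI[of _ d]) (auto simp: inner3)
    then show ?thesis using assms(2) by simp
  next
    case False
    have "\<forall>X\<in>S. onp (- \<nu>$1/\<nu>$3) (- \<nu>$2/\<nu>$3) (d/\<nu>$3) X"
      using sub False by (auto simp: onp_def inner3 field_simps)
    then show ?thesis by blast
  qed
qed

lemma onp_coplanar: assumes "\<forall>X\<in>S. onp a b c X" shows "coplanar S"
proof -
  let ?u = "vector [0, 0, c] :: pt" and ?v = "vector [1, 0, a + c] :: pt" and ?w = "vector [0, 1, b + c] :: pt"
  have "S \<subseteq> affine hull {?u, ?v, ?w}"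
  proof
    fix X assume "X \<in> S"
    then have "X = (1 - X$1 - X$2) *\<^sub>R ?u + (X$1) *\<^sub>R ?v + (X$2) *\<^sub>R ?w"
      using assms by (auto simp: vec3_eq onp_def algebra_simps)
    then show "X \<in> affine hull {?u, ?v, ?w}" unfolding affine_hull_3 by force
  qed
  then show ?thesis unfolding coplanar_def by blast
qed

lemma convex_quad_coplanar: assumes "convex_quad A B C D" shows "coplanar {A, B, C, D}"
proof -
  obtain p where "p \<in> open_segment A C" "p \<in> open_segment B D"
    using assms by (auto simp: convex_quad_def)
  then obtain u v where u: "0 < u" "u < 1" "p = (1 - u) *\<^sub>R A + u *\<^sub>R C"
    and v: "0 < v" "v < 1" "p = (1 - v) *\<^sub>R B + v *\<^sub>R D"
    by (auto simp: in_segment)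
  have e: "\<forall>k. (1 - u) * A$k + u * C$k = (1 - v) * B$k + v * D$k"
    using u(3) v(3) by (auto simp: vec_eq_iff)
  have D: "D = ((1 - u)/v) *\<^sub>R A + (- (1 - v)/v) *\<^sub>R B + (u/v) *\<^sub>R C"
  proof -
    have "D$k = ((1 - u)/v) * A$k + (- (1 - v)/v) * B$k + (u/v) * C$k" for k
    proof -
      have h1: "v * D$k = (1-u)*A$k + u*C$k - (1-v)*B$k" using e[rule_format, of k] by (simp add: algebra_simps)
      have h2: "D$k = ((1-u)*A$k + u*C$k - (1-v)*B$k) / v" using h1 v(1) by (simp add: field_simps)
      show ?thesis unfolding h2 using v(1) by (simp add: field_simps)
    qed
    then show ?thesis by (simp add: vec_eq_iff)
  qed
  have s: "(1 - u)/v + - (1 - v)/v + u/v = 1" using v by (simp add: field_simps)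
  have "D \<in> affine hull {A, B, C}" unfolding affine_hull_3 using D s by blast
  then have "{A, B, C, D} \<subseteq> affine hull {A, B, C}" by (simp add: hull_inc)
  then show ?thesis unfolding coplanar_def by blast
qed

lemma vert_iso: assumes "\<not> tcol S" "X0 \<in> S"
  and "\<forall>X\<in>S. iso_cong \<phi> c1 c2 b X $ 1 = 0 \<and> iso_cong \<phi> c1 c2 b X $ 2 = 0"
  shows "\<forall>X\<in>S. iso_cong \<phi> c1 c2 b X = vector [0, 0, c1 * X$1 + c2 * X$2 + b$3]"
proof -
  have h: "\<forall>X\<in>S. - \<phi> * X$2 + b$1 = 0 \<and> \<phi> * X$1 + b$2 = 0"
    using assms(3) by (simp add: iso_cong_def)
  have "\<phi> = 0"
  proof (rule ccontr)
    assume "\<phi> \<noteq> 0"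
    then have "tcol S" unfolding tcol_def using h
      by (intro exI[of _ "\<phi>"] exI[of _ 0] exI[of _ "- b$2"]) auto
    then show False using assms(1) by simp
  qed
  then have "b$1 = 0" "b$2 = 0" using h assms(2) by auto
  then show ?thesis using \<open>\<phi> = 0\<close> by (simp add: iso_cong_def vec3_eq)
qed


lemma area4_deriv:
  "((\<lambda>t. area4 (A + t *\<^sub>R A') (B + t *\<^sub>R B') (C + t *\<^sub>R C') (D + t *\<^sub>R D')) has_real_derivative
     mixed_area A B C D A' B' C' D') (at 0)"
proof -
  obtain a1 a2 where A: "A = (a1, a2)" by (cases A)
  obtain b1 b2 where B: "B = (b1, b2)" by (cases B)
  obtain c1 c2 where C: "C = (c1, c2)" by (cases C)
  obtain d1 d2 where D: "D = (d1, d2)" by (cases D)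
  obtain a1' a2' where A': "A' = (a1', a2')" by (cases A')
  obtain b1' b2' where B': "B' = (b1', b2')" by (cases B')
  obtain c1' c2' where C': "C' = (c1', c2')" by (cases C')
  obtain d1' d2' where D': "D' = (d1', d2')" by (cases D')
  let ?g = "\<lambda>t. (a1 + t*a1') * (b2 + t*b2') - (a2 + t*a2') * (b1 + t*b1')
     + ((b1 + t*b1') * (c2 + t*c2') - (b2 + t*b2') * (c1 + t*c1'))
     + ((c1 + t*c1') * (d2 + t*d2') - (c2 + t*c2') * (d1 + t*d1'))
     + ((d1 + t*d1') * (a2 + t*a2') - (d2 + t*d2') * (a1 + t*a1'))"
  let ?E = "(a1 * b2' + a1' * b2 - a2 * b1' - a2' * b1 + (b1 * c2' + b1' * c2 - b2 * c1' - b2' * c1)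
     + (c1 * d2' + c1' * d2 - c2 * d1' - c2' * d1) + (d1 * a2' + d1' * a2 - d2 * a1' - d2' * a1)) / 2"
  have eq: "(\<lambda>t. area4 (A + t *\<^sub>R A') (B + t *\<^sub>R B') (C + t *\<^sub>R C') (D + t *\<^sub>R D')) = (\<lambda>t. ?g t / 2)"
    by (simp add: A B C D A' B' C' D' area4_def det2_def)
  have "((\<lambda>t. ?g t / 2) has_real_derivative ?E) (at 0)"
    apply (rule DERIV_cdivide)
    by (auto intro!: derivative_eq_intros simp: algebra_simps)
  then have e: "((\<lambda>t. area4 (A + t *\<^sub>R A') (B + t *\<^sub>R B') (C + t *\<^sub>R C') (D + t *\<^sub>R D')) has_real_derivative ?E) (at 0)"
    by (simp only: eq)
  then show ?thesis unfolding mixed_area_def by (rule DERIV_imp_deriv[OF e, symmetric, THEN subst])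
qed


lemma adm_nu:
  assumes adm: "admissible_4hedral Q e1 e2 e3 e4"
    and h: "\<nu> \<bullet> e1 \<ge> 0" "\<nu> \<bullet> e2 \<ge> 0" "\<nu> \<bullet> e3 \<ge> 0" "\<nu> \<bullet> e4 \<ge> 0" and nz: "\<nu> \<noteq> 0"
  shows "\<nu>$3 \<noteq> 0"
proof
  assume z: "\<nu>$3 = 0"
  obtain s where x: "Q + s *\<^sub>R axis 3 1 \<in> interior (angle_solid Q e1 e2 e3 e4)"
    using adm admissible_4hedral_def by blast
  then obtain e where e: "e > 0" "ball (Q + s *\<^sub>R axis 3 1) e \<subseteq> angle_solid Q e1 e2 e3 e4"
    using mem_interior by blast
  define y where "y = (Q + s *\<^sub>R axis 3 1) - (e / 2 / norm \<nu>) *\<^sub>R \<nu>"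
  have "dist (Q + s *\<^sub>R axis 3 1) y = e / 2" using nz e(1) by (simp add: y_def dist_norm)
  then have "y \<in> angle_solid Q e1 e2 e3 e4" using e by auto
  then obtain a b c d where abcd: "a \<ge> 0" "b \<ge> 0" "c \<ge> 0" "d \<ge> 0"
    "y = Q + (a *\<^sub>R e1 + b *\<^sub>R e2 + c *\<^sub>R e3 + d *\<^sub>R e4)"
    unfolding angle_solid_def by blast
  have "\<nu> \<bullet> (y - Q) = a * (\<nu> \<bullet> e1) + b * (\<nu> \<bullet> e2) + c * (\<nu> \<bullet> e3) + d * (\<nu> \<bullet> e4)"
    using abcd(5) by (simp add: inner_add_right)
  also have "\<dots> \<ge> 0" using abcd h by simp
  finally have ge: "\<nu> \<bullet> (y - Q) \<ge> 0" .
  have "\<nu> \<bullet> (y - Q) = s * \<nu>$3 - (e / 2 / norm \<nu>) * (\<nu> \<bullet> \<nu>)"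
    by (simp add: y_def inner_diff_right inner_axis)
  also have "\<dots> = - (e / 2) * norm \<nu>" using z nz by (simp add: power2_norm_eq_inner[symmetric] power2_eq_square)
  also have "\<dots> < 0" using e(1) nz by simp
  finally show False using ge by simp
qed

lemma face_onp:
  assumes "face_plane F i j = flat_plane Q a b" "\<nu> \<bullet> a = 0" "\<nu> \<bullet> b = 0" "\<nu>$3 \<noteq> 0"
  shows "\<exists>\<alpha> \<beta> \<gamma>. \<forall>X\<in>fv F i j. onp \<alpha> \<beta> \<gamma> X"
proof -
  have "fv F i j \<subseteq> face_plane F i j" unfolding fv_def face_plane_def by (rule hull_subset)
  also have "\<dots> \<subseteq> {x. \<nu> \<bullet> x = \<nu> \<bullet> Q}" unfolding assms(1) flat_plane_def
    apply (rule hull_minimal)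
    using assms(2,3) apply (auto simp: inner_add_right)[1]
    by (rule affine_hyperplane)
  finally have sub: "fv F i j \<subseteq> {x. \<nu> \<bullet> x = \<nu> \<bullet> Q}" .
  have "\<forall>X\<in>fv F i j. onp (- \<nu>$1/\<nu>$3) (- \<nu>$2/\<nu>$3) ((\<nu> \<bullet> Q)/\<nu>$3) X"
  proof
    fix X assume "X \<in> fv F i j"
    then have "\<nu> \<bullet> X = \<nu> \<bullet> Q" using sub by auto
    then have "\<nu>$1 * X$1 + \<nu>$2 * X$2 + \<nu>$3 * X$3 = \<nu> \<bullet> Q" by (simp add: inner3)
    then show "onp (- \<nu>$1/\<nu>$3) (- \<nu>$2/\<nu>$3) ((\<nu> \<bullet> Q)/\<nu>$3) X"
      using assms(4) unfolding onp_def by (simp add: field_simps)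
  qed
  then show ?thesis by blast
qed

lemma pair_onp:
  assumes adm: "admissible_4hedral Q e1 e2 e3 e4" and sp: "supp_pair a b c d"
    and perm: "\<And>\<nu>. \<nu> \<bullet> a \<ge> 0 \<Longrightarrow> \<nu> \<bullet> b \<ge> 0 \<Longrightarrow> \<nu> \<bullet> c \<ge> 0 \<Longrightarrow> \<nu> \<bullet> d \<ge> 0 \<Longrightarrow>
        \<nu> \<bullet> e1 \<ge> 0 \<and> \<nu> \<bullet> e2 \<ge> 0 \<and> \<nu> \<bullet> e3 \<ge> 0 \<and> \<nu> \<bullet> e4 \<ge> 0"
    and fp: "face_plane F i j = flat_plane Q a b"
  shows "\<exists>\<alpha> \<beta> \<gamma>. \<forall>X\<in>fv F i j. onp \<alpha> \<beta> \<gamma> X"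
proof -
  obtain \<nu> where nu: "\<nu> \<bullet> a = 0" "\<nu> \<bullet> b = 0" "\<nu> \<bullet> c > 0" "\<nu> \<bullet> d > 0"
    using sp supp_pair_def by blast
  have nz: "\<nu> \<noteq> 0" using nu(3) by auto
  have "\<nu>$3 \<noteq> 0" using adm_nu[OF adm _ _ _ _ nz] perm[of \<nu>] nu by auto
  then show ?thesis using face_onp[OF fp nu(1,2)] by blast
qed

lemma F_faces:
  assumes dc: "dual_convex m n F" and ij: "i < m" "j < n"
  shows "\<exists>\<alpha> \<beta> \<gamma>. \<forall>X\<in>fv F i j. onp \<alpha> \<beta> \<gamma> X"
proof -
  define i' where "i' = (if i = 0 then 1 else i)"
  define j' where "j' = (if j = 0 then 1 else j)"
  have r: "1 \<le> i'" "i' < m" "1 \<le> j'" "j' < n" using dc ij by (auto simp: i'_def j'_def dual_convex_def)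
  then obtain Q e1 e2 e3 e4 where c4: "convex_4hedral e1 e2 e3 e4" and adm: "admissible_4hedral Q e1 e2 e3 e4"
    and f1: "flat_plane Q e1 e2 = face_plane F (i' - 1) (j' - 1)"
    and f2: "flat_plane Q e2 e3 = face_plane F i' (j' - 1)"
    and f3: "flat_plane Q e3 e4 = face_plane F i' j'"
    and f4: "flat_plane Q e4 e1 = face_plane F (i' - 1) j'"
    using dc unfolding dual_convex_def by blast
  have sp: "supp_pair e1 e2 e3 e4" "supp_pair e2 e3 e4 e1" "supp_pair e3 e4 e1 e2" "supp_pair e4 e1 e2 e3"
    using c4 convex_4hedral_def by auto
  consider "i = 0" "j = 0" | "i = 0" "j \<noteq> 0" | "i \<noteq> 0" "j = 0" | "i \<noteq> 0" "j \<noteq> 0" by blast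
  then show ?thesis
  proof cases
    case 1
    then show ?thesis using pair_onp[OF adm sp(1), of F i j] f1 by (auto simp: i'_def j'_def)
  next
    case 2
    then show ?thesis using pair_onp[OF adm sp(4), of F i j] f4 by (auto simp: i'_def j'_def)
  next
    case 3
    then show ?thesis using pair_onp[OF adm sp(2), of F i j] f2 by (auto simp: i'_def j'_def)
  next
    case 4
    then show ?thesis using pair_onp[OF adm sp(3), of F i j] f3 by (auto simp: i'_def j'_def)
  qed
qed


lemma tcol_mono: "tcol T \<Longrightarrow> S \<subseteq> T \<Longrightarrow> tcol S"
  unfolding tcol_def by blast

lemma face_noncol: assumes "is_net m n F" "i < m" "j < n" shows "\<not> collinear (fv F i j)"
  using assms by (auto simp: is_net_def convex_quad_def fv_def)

lemma F_not_tcol: assumes "is_net m n F" "dual_convex m n F" "i < m" "j < n"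
  shows "\<not> tcol (fv F i j)"
  using F_faces[OF assms(2-4)] face_noncol[OF assms(1,3,4)] tcol_collinear by blast

lemma tcol_top: assumes "\<forall>p q. p \<in> {i, Suc i} \<longrightarrow> q \<in> {j, Suc j} \<longrightarrow> G p q $ 1 = F p q $ 1 \<and> G p q $ 2 = F p q $ 2"
  and "tcol (fv G i j)" shows "tcol (fv F i j)"
  using assms unfolding tcol_def fv_def by auto

lemma face_sh:
  assumes on: "\<forall>X\<in>fv F i j. onp a b c X"
    and V: "\<forall>p q. p \<in> {i, Suc i} \<longrightarrow> q \<in> {j, Suc j} \<longrightarrow> V p q = vector [0, 0, \<alpha> * F p q $ 1 + \<beta> * F p q $ 2 + \<gamma>]"
    and p: "p \<in> {i, Suc i}" and q: "q \<in> {j, Suc j}"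
  shows "F p q + t *\<^sub>R V p q = sh (t * \<alpha>) (t * \<beta>) (t * \<gamma>) (F p q)"
    and "vector [F p q $ 1, F p q $ 2, 0] + V p q = sh (\<alpha> - a) (\<beta> - b) (\<gamma> - c) (F p q)"
proof -
  have "F p q \<in> fv F i j" using p q by (auto simp: fv_def)
  then have o: "onp a b c (F p q)" using on by blast
  have Vpq: "V p q = vector [0, 0, \<alpha> * F p q $ 1 + \<beta> * F p q $ 2 + \<gamma>]" using V p q by blast
  show "F p q + t *\<^sub>R V p q = sh (t * \<alpha>) (t * \<beta>) (t * \<gamma>) (F p q)"
    by (simp add: Vpq sh_def vec3_eq algebra_simps)
  show "vector [F p q $ 1, F p q $ 2, 0] + V p q = sh (\<alpha> - a) (\<beta> - b) (\<gamma> - c) (F p q)"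
    using o by (simp add: Vpq sh_def vec3_eq algebra_simps onp_def)
qed

lemma fv_image: assumes "\<And>p q. p \<in> {i, Suc i} \<Longrightarrow> q \<in> {j, Suc j} \<Longrightarrow> H p q = f (F p q)"
  shows "fv H i j = f ` fv F i j"
  using assms by (simp add: fv_def)

lemma faceG:
  assumes net: "is_net m n F" and dc: "dual_convex m n F" and ij: "i < m" "j < n"
    and V: "\<forall>p q. p \<in> {i, Suc i} \<longrightarrow> q \<in> {j, Suc j} \<longrightarrow> V p q = vector [0, 0, \<alpha> * F p q $ 1 + \<beta> * F p q $ 2 + \<gamma>]"
    and G: "\<forall>p q. p \<in> {i, Suc i} \<longrightarrow> q \<in> {j, Suc j} \<longrightarrow> G p q = vector [F p q $ 1, F p q $ 2, 0] + V p q"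
  shows "gauss_top G i j = (\<alpha>, \<beta>)"
    and "gauss_top (\<lambda>k l. F k l + t *\<^sub>R V k l) i j = gauss_top F i j + t *\<^sub>R (\<alpha>, \<beta>)"
    and "convex_quad (G i j) (G (Suc i) j) (G (Suc i) (Suc j)) (G i (Suc j))"
proof -
  obtain a b c where on: "\<forall>X\<in>fv F i j. onp a b c X" using F_faces[OF dc ij] by blast
  have nc: "\<not> collinear (fv F i j)" by (rule face_noncol[OF net ij])
  have gF: "gauss_top F i j = (a, b)" by (rule gauss_onp[OF nc on])
  let ?s = "sh (\<alpha> - a) (\<beta> - b) (\<gamma> - c)"
  have Gs: "G p q = ?s (F p q)" if "p \<in> {i, Suc i}" "q \<in> {j, Suc j}" for p q
  proof -
    have "G p q = vector [F p q $ 1, F p q $ 2, 0] + V p q" using G that by blast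
    then show ?thesis using face_sh(2)[OF on V that] by simp
  qed
  have fvG: "fv G i j = ?s ` fv F i j" by (rule fv_image) (rule Gs)
  have onG: "\<forall>X\<in>fv G i j. onp \<alpha> \<beta> \<gamma> X" unfolding fvG using on
    by (auto simp: sh_def onp_def algebra_simps)
  show "gauss_top G i j = (\<alpha>, \<beta>)"
    by (rule gauss_onp[OF _ onG]) (simp add: fvG sh_noncollinear[OF nc])
  let ?t = "sh (t * \<alpha>) (t * \<beta>) (t * \<gamma>)"
  have fvT: "fv (\<lambda>k l. F k l + t *\<^sub>R V k l) i j = ?t ` fv F i j"
    by (rule fv_image) (use face_sh(1)[OF on V] in simp)
  have onT: "\<forall>X\<in>fv (\<lambda>k l. F k l + t *\<^sub>R V k l) i j. onp (a + t * \<alpha>) (b + t * \<beta>) (c + t * \<gamma>) X"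
    unfolding fvT using on by (auto simp: sh_def onp_def algebra_simps)
  have "gauss_top (\<lambda>k l. F k l + t *\<^sub>R V k l) i j = (a + t * \<alpha>, b + t * \<beta>)"
    by (rule gauss_onp[OF _ onT]) (simp add: fvT sh_noncollinear[OF nc])
  then show "gauss_top (\<lambda>k l. F k l + t *\<^sub>R V k l) i j = gauss_top F i j + t *\<^sub>R (\<alpha>, \<beta>)"
    by (simp add: gF)
  have "convex_quad (F i j) (F (Suc i) j) (F (Suc i) (Suc j)) (F i (Suc j))" using net ij is_net_def by blast
  from sh_convex_quad[OF this, of "\<alpha> - a" "\<beta> - b" "\<gamma> - c"]
  show "convex_quad (G i j) (G (Suc i) j) (G (Suc i) (Suc j)) (G i (Suc j))"
    using Gs by simp
qed


definition nform :: "nat \<Rightarrow> nat \<Rightarrow> net \<Rightarrow> net \<Rightarrow> bool" where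
  "nform m n F V \<longleftrightarrow> (\<forall>i j. i < m \<longrightarrow> j < n \<longrightarrow> (\<exists>\<alpha> \<beta> \<gamma>. \<forall>p q. p \<in> {i, Suc i} \<longrightarrow> q \<in> {j, Suc j} \<longrightarrow>
       V p q = vector [0, 0, \<alpha> * F p q $ 1 + \<beta> * F p q $ 2 + \<gamma>]))"

lemma key:
  assumes net: "is_net m n F" and dc: "dual_convex m n F" and nf: "nform m n F V"
    and G: "\<forall>i j. i \<le> m \<longrightarrow> j \<le> n \<longrightarrow> G i j = vector [F i j $ 1, F i j $ 2, 0] + V i j"
    and ij: "i \<le> m" "j \<le> n" "\<not> boundary_vertex m n i j"
  shows "((\<lambda>t. curvature (\<lambda>k l. F k l + t *\<^sub>R V k l) i j) has_real_derivative mixed_curvature m n F G i j) (at 0)"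
proof -
  have face: "\<exists>A'. gauss_top G k l = A' \<and> (\<forall>t. gauss_top (\<lambda>k l. F k l + t *\<^sub>R V k l) k l = gauss_top F k l + t *\<^sub>R A')"
    if kl: "k < m" "l < n" for k l
  proof -
    obtain \<alpha> \<beta> \<gamma> where V: "\<forall>p q. p \<in> {k, Suc k} \<longrightarrow> q \<in> {l, Suc l} \<longrightarrow>
       V p q = vector [0, 0, \<alpha> * F p q $ 1 + \<beta> * F p q $ 2 + \<gamma>]" using nf kl unfolding nform_def by blast
    have G': "\<forall>p q. p \<in> {k, Suc k} \<longrightarrow> q \<in> {l, Suc l} \<longrightarrow> G p q = vector [F p q $ 1, F p q $ 2, 0] + V p q"
      using G kl by auto
    show ?thesis using faceG(1,2)[OF net dc kl V G'] by blast
  qed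
  have r: "1 \<le> i" "i < m" "1 \<le> j" "j < n" using ij by (auto simp: boundary_vertex_def)
  obtain A' where A: "gauss_top G (i-1) (j-1) = A'" "\<forall>t. gauss_top (\<lambda>k l. F k l + t *\<^sub>R V k l) (i-1) (j-1) = gauss_top F (i-1) (j-1) + t *\<^sub>R A'"
    using face[of "i-1" "j-1"] r by auto
  obtain B' where B: "gauss_top G i (j-1) = B'" "\<forall>t. gauss_top (\<lambda>k l. F k l + t *\<^sub>R V k l) i (j-1) = gauss_top F i (j-1) + t *\<^sub>R B'"
    using face[of "i" "j-1"] r by auto
  obtain C' where C: "gauss_top G i j = C'" "\<forall>t. gauss_top (\<lambda>k l. F k l + t *\<^sub>R V k l) i j = gauss_top F i j + t *\<^sub>R C'"
    using face[of "i" "j"] r by auto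
  obtain D' where D: "gauss_top G (i-1) j = D'" "\<forall>t. gauss_top (\<lambda>k l. F k l + t *\<^sub>R V k l) (i-1) j = gauss_top F (i-1) j + t *\<^sub>R D'"
    using face[of "i-1" "j"] r by auto
  have eq: "(\<lambda>t. curvature (\<lambda>k l. F k l + t *\<^sub>R V k l) i j) =
    (\<lambda>t. area4 (gauss_top F (i-1) (j-1) + t *\<^sub>R A') (gauss_top F i (j-1) + t *\<^sub>R B') (gauss_top F i j + t *\<^sub>R C') (gauss_top F (i-1) j + t *\<^sub>R D'))"
    unfolding curvature_def using A(2) B(2) C(2) D(2) by simp
  have "mixed_curvature m n F G i j = mixed_area (gauss_top F (i-1) (j-1)) (gauss_top F i (j-1)) (gauss_top F i j) (gauss_top F (i-1) j) A' B' C' D'"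
    unfolding mixed_curvature_def using ij(3) A(1) B(1) C(1) D(1) by simp
  then show ?thesis unfolding eq by (simp add: area4_deriv)
qed

lemma iso0: "iso_cong 0 a b (vector [0, 0, c]) X = vector [0, 0, a * X$1 + b * X$2 + c]"
  by (simp add: iso_cong_def vec3_eq)


theorem lemma4:
  fixes m n :: nat and F :: net
  assumes "is_net m n F" and "dual_convex m n F"
  shows "velocity_diagram m n F G \<longleftrightarrow>
           (is_net m n G \<and> v_parallel m n F G \<and>
            \<not> coplanar {G i j | i j. i \<le> m \<and> j \<le> n} \<and>
            (\<forall>i j. i \<le> m \<longrightarrow> j \<le> n \<longrightarrow> mixed_curvature m n F G i j = 0))"
proof -
  have mn: "2 \<le> m" "2 \<le> n" using assms(2) unfolding dual_convex_def by auto
  show ?thesis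
  proof
    assume vd: "velocity_diagram m n F G"
    then obtain V where inf: "inf_iso_isometric m n F V" and nt: "\<not> trivial_deformation m n F V"
      and vert: "\<forall>i j. i \<le> m \<longrightarrow> j \<le> n \<longrightarrow> V i j $ 1 = 0 \<and> V i j $ 2 = 0"
      and Gd: "\<forall>i j. i \<le> m \<longrightarrow> j \<le> n \<longrightarrow> G i j = vector [F i j $ 1, F i j $ 2, 0] + V i j"
      unfolding velocity_diagram_def by blast
    have nf: "nform m n F V"
      unfolding nform_def
    proof (intro allI impI)
      fix i j assume ij: "i < m" "j < n"
      obtain \<phi> c1 c2 b where V4: "V i j = iso_cong \<phi> c1 c2 b (F i j)"
        "V (Suc i) j = iso_cong \<phi> c1 c2 b (F (Suc i) j)"
        "V (Suc i) (Suc j) = iso_cong \<phi> c1 c2 b (F (Suc i) (Suc j))"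
        "V i (Suc j) = iso_cong \<phi> c1 c2 b (F i (Suc j))"
        using inf ij unfolding inf_iso_isometric_def by blast
      have vc: "\<forall>X\<in>fv F i j. iso_cong \<phi> c1 c2 b X $ 1 = 0 \<and> iso_cong \<phi> c1 c2 b X $ 2 = 0"
      proof -
        have w: "V i j $ 1 = 0 \<and> V i j $ 2 = 0" "V (Suc i) j $ 1 = 0 \<and> V (Suc i) j $ 2 = 0"
          "V (Suc i) (Suc j) $ 1 = 0 \<and> V (Suc i) (Suc j) $ 2 = 0" "V i (Suc j) $ 1 = 0 \<and> V i (Suc j) $ 2 = 0"
          using vert ij by auto
        then show ?thesis unfolding fv_def by (simp add: V4[symmetric])
      qed
      have vv: "\<forall>X\<in>fv F i j. iso_cong \<phi> c1 c2 b X = vector [0, 0, c1 * X$1 + c2 * X$2 + b$3]"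
        using vert_iso[OF F_not_tcol[OF assms ij] _ vc, of "F i j"] by (simp add: fv_def)
      have "\<forall>p q. p \<in> {i, Suc i} \<longrightarrow> q \<in> {j, Suc j} \<longrightarrow>
          V p q = vector [0, 0, c1 * F p q $ 1 + c2 * F p q $ 2 + b$3]"
        using V4 vv unfolding fv_def by auto
      then show "\<exists>\<alpha> \<beta> \<gamma>. \<forall>p q. p \<in> {i, Suc i} \<longrightarrow> q \<in> {j, Suc j} \<longrightarrow>
          V p q = vector [0, 0, \<alpha> * F p q $ 1 + \<beta> * F p q $ 2 + \<gamma>]" by blast
    qed
    have Gnet: "is_net m n G" unfolding is_net_def
    proof (intro allI impI)
      fix i j assume ij: "i < m" "j < n"
      obtain \<alpha> \<beta> \<gamma> where V: "\<forall>p q. p \<in> {i, Suc i} \<longrightarrow> q \<in> {j, Suc j} \<longrightarrow>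
          V p q = vector [0, 0, \<alpha> * F p q $ 1 + \<beta> * F p q $ 2 + \<gamma>]"
        using nf ij unfolding nform_def by blast
      have G': "\<forall>p q. p \<in> {i, Suc i} \<longrightarrow> q \<in> {j, Suc j} \<longrightarrow> G p q = vector [F p q $ 1, F p q $ 2, 0] + V p q"
        using Gd ij by auto
      show "convex_quad (G i j) (G (Suc i) j) (G (Suc i) (Suc j)) (G i (Suc j))"
        by (rule faceG(3)[OF assms ij V G'])
    qed
    have vp: "v_parallel m n F G" unfolding v_parallel_def using Gd vert by auto
    have ncp: "\<not> coplanar {G i j | i j. i \<le> m \<and> j \<le> n}"
    proof
      assume cp: "coplanar {G i j | i j. i \<le> m \<and> j \<le> n}"
      have "\<not> tcol (fv G 0 0)"
      proof
        assume t: "tcol (fv G 0 0)"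
        have top: "\<forall>p q. p \<in> {0, Suc 0} \<longrightarrow> q \<in> {0, Suc 0} \<longrightarrow> G p q $ 1 = F p q $ 1 \<and> G p q $ 2 = F p q $ 2"
          using vp mn unfolding v_parallel_def by auto
        have "tcol (fv F 0 0)" by (rule tcol_top[OF top t])
        then show False using F_not_tcol[OF assms, of 0 0] mn by simp
      qed
      moreover have "fv G 0 0 \<subseteq> {G i j | i j. i \<le> m \<and> j \<le> n}"
      proof -
        have "G p q \<in> {G i j | i j. i \<le> m \<and> j \<le> n}" if "p \<le> m" "q \<le> n" for p q using that by blast
        then show ?thesis using mn unfolding fv_def by simp
      qed
      ultimately have "\<not> tcol {G i j | i j. i \<le> m \<and> j \<le> n}" using tcol_mono by blast
      then obtain a b c where on: "\<forall>X\<in>{G i j | i j. i \<le> m \<and> j \<le> n}. onp a b c X"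
        using coplanar_onp[OF cp] by blast
      have "trivial_deformation m n F V"
        unfolding trivial_deformation_def
      proof (rule exI[of _ "0::real"], rule exI[of _ a], rule exI[of _ b], rule exI[of _ "vector [0, 0, c] :: pt"], intro allI impI)
        fix i j assume ij: "i \<le> m" "j \<le> n"
        have "onp a b c (G i j)" using on ij by blast
        moreover have "G i j = vector [F i j $ 1, F i j $ 2, 0] + V i j" using Gd ij by blast
        moreover have "V i j $ 1 = 0" "V i j $ 2 = 0" using vert ij by auto
        ultimately show "V i j = iso_cong 0 a b (vector [0, 0, c]) (F i j)"
          by (simp add: iso0 vec3_eq onp_def)
      qed
      then show False using nt by simp
    qed
    have mc: "\<forall>i j. i \<le> m \<longrightarrow> j \<le> n \<longrightarrow> mixed_curvature m n F G i j = 0"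
    proof (intro allI impI)
      fix i j assume ij: "i \<le> m" "j \<le> n"
      show "mixed_curvature m n F G i j = 0"
      proof (cases "boundary_vertex m n i j")
        case True then show ?thesis by (simp add: mixed_curvature_def)
      next
        case False
        have d1: "((\<lambda>t. curvature (\<lambda>k l. F k l + t *\<^sub>R V k l) i j) has_real_derivative mixed_curvature m n F G i j) (at 0)"
          by (rule key[OF assms nf Gd ij False])
        have d0: "((\<lambda>t. curvature (\<lambda>k l. F k l + t *\<^sub>R V k l) i j) has_real_derivative 0) (at 0)"
          using inf ij False unfolding inf_iso_isometric_def by blast
        show ?thesis using DERIV_unique[OF d1 d0] .
      qed
    qed
    show "is_net m n G \<and> v_parallel m n F G \<and> \<not> coplanar {G i j | i j. i \<le> m \<and> j \<le> n} \<and>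
        (\<forall>i j. i \<le> m \<longrightarrow> j \<le> n \<longrightarrow> mixed_curvature m n F G i j = 0)"
      using Gnet vp ncp mc by blast
  next
    assume R: "is_net m n G \<and> v_parallel m n F G \<and> \<not> coplanar {G i j | i j. i \<le> m \<and> j \<le> n} \<and>
        (\<forall>i j. i \<le> m \<longrightarrow> j \<le> n \<longrightarrow> mixed_curvature m n F G i j = 0)"
    then have Gnet: "is_net m n G" and vp: "v_parallel m n F G"
      and ncp: "\<not> coplanar {G i j | i j. i \<le> m \<and> j \<le> n}"
      and mc: "\<forall>i j. i \<le> m \<longrightarrow> j \<le> n \<longrightarrow> mixed_curvature m n F G i j = 0" by auto
    define V where "V = (\<lambda>i j. G i j - vector [F i j $ 1, F i j $ 2, 0])"
    have Gd: "\<forall>i j. i \<le> m \<longrightarrow> j \<le> n \<longrightarrow> G i j = vector [F i j $ 1, F i j $ 2, 0] + V i j"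
      by (simp add: V_def)
    have vert: "\<forall>i j. i \<le> m \<longrightarrow> j \<le> n \<longrightarrow> V i j $ 1 = 0 \<and> V i j $ 2 = 0"
      using vp by (simp add: V_def v_parallel_def)
    have nf: "nform m n F V" unfolding nform_def
    proof (intro allI impI)
      fix i j assume ij: "i < m" "j < n"
      have "convex_quad (G i j) (G (Suc i) j) (G (Suc i) (Suc j)) (G i (Suc j))"
        using Gnet ij unfolding is_net_def by blast
      then have cp: "coplanar (fv G i j)" unfolding fv_def by (rule convex_quad_coplanar)
      have top: "\<forall>p q. p \<in> {i, Suc i} \<longrightarrow> q \<in> {j, Suc j} \<longrightarrow> G p q $ 1 = F p q $ 1 \<and> G p q $ 2 = F p q $ 2"
        using vp ij unfolding v_parallel_def by auto
      have "\<not> tcol (fv G i j)" using tcol_top[OF top] F_not_tcol[OF assms ij] by blast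
      then obtain \<alpha> \<beta> \<gamma> where on: "\<forall>X\<in>fv G i j. onp \<alpha> \<beta> \<gamma> X" using coplanar_onp[OF cp] by blast
      have "\<forall>p q. p \<in> {i, Suc i} \<longrightarrow> q \<in> {j, Suc j} \<longrightarrow>
          V p q = vector [0, 0, \<alpha> * F p q $ 1 + \<beta> * F p q $ 2 + \<gamma>]"
      proof (intro allI impI)
        fix p q assume pq: "p \<in> {i, Suc i}" "q \<in> {j, Suc j}"
        have "G p q \<in> fv G i j" using pq by (auto simp: fv_def)
        then have "onp \<alpha> \<beta> \<gamma> (G p q)" using on by blast
        moreover have "G p q $ 1 = F p q $ 1" "G p q $ 2 = F p q $ 2" using top pq by auto
        ultimately show "V p q = vector [0, 0, \<alpha> * F p q $ 1 + \<beta> * F p q $ 2 + \<gamma>]"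
          by (simp add: V_def vec3_eq onp_def)
      qed
      then show "\<exists>\<alpha> \<beta> \<gamma>. \<forall>p q. p \<in> {i, Suc i} \<longrightarrow> q \<in> {j, Suc j} \<longrightarrow>
          V p q = vector [0, 0, \<alpha> * F p q $ 1 + \<beta> * F p q $ 2 + \<gamma>]" by blast
    qed
    have inf: "inf_iso_isometric m n F V" unfolding inf_iso_isometric_def
    proof (intro conjI allI impI)
      fix i j assume ij: "i < m" "j < n"
      obtain \<alpha> \<beta> \<gamma> where V: "\<forall>p q. p \<in> {i, Suc i} \<longrightarrow> q \<in> {j, Suc j} \<longrightarrow>
          V p q = vector [0, 0, \<alpha> * F p q $ 1 + \<beta> * F p q $ 2 + \<gamma>]"
        using nf ij unfolding nform_def by blast
      have "V i j = iso_cong 0 \<alpha> \<beta> (vector [0, 0, \<gamma>]) (F i j) \<and>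
            V (Suc i) j = iso_cong 0 \<alpha> \<beta> (vector [0, 0, \<gamma>]) (F (Suc i) j) \<and>
            V (Suc i) (Suc j) = iso_cong 0 \<alpha> \<beta> (vector [0, 0, \<gamma>]) (F (Suc i) (Suc j)) \<and>
            V i (Suc j) = iso_cong 0 \<alpha> \<beta> (vector [0, 0, \<gamma>]) (F i (Suc j))"
        unfolding iso0 using V by blast
      then show "\<exists>\<phi> c1 c2 b. V i j = iso_cong \<phi> c1 c2 b (F i j) \<and>
            V (Suc i) j = iso_cong \<phi> c1 c2 b (F (Suc i) j) \<and>
            V (Suc i) (Suc j) = iso_cong \<phi> c1 c2 b (F (Suc i) (Suc j)) \<and>
            V i (Suc j) = iso_cong \<phi> c1 c2 b (F i (Suc j))" by blast
    next
      fix i j assume ij: "i \<le> m" "j \<le> n" "\<not> boundary_vertex m n i j"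
      have "mixed_curvature m n F G i j = 0" using mc ij by blast
      then show "((\<lambda>t. curvature (\<lambda>k l. F k l + t *\<^sub>R V k l) i j) has_real_derivative 0) (at 0)"
        using key[OF assms nf Gd ij] by simp
    qed
    have nt: "\<not> trivial_deformation m n F V"
    proof
      assume "trivial_deformation m n F V"
      then obtain \<phi> c1 c2 b where tr: "\<forall>i j. i \<le> m \<longrightarrow> j \<le> n \<longrightarrow> V i j = iso_cong \<phi> c1 c2 b (F i j)"
        unfolding trivial_deformation_def by blast
      let ?S = "{F i j | i j. i \<le> m \<and> j \<le> n}"
      have "fv F 0 0 \<subseteq> ?S"
      proof -
        have "F p q \<in> ?S" if "p \<le> m" "q \<le> n" for p q using that by blast
        then show ?thesis using mn unfolding fv_def by simp
      qed
      then have ntc: "\<not> tcol ?S" using F_not_tcol[OF assms, of 0 0] mn tcol_mono by auto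
      have vc: "\<forall>X\<in>?S. iso_cong \<phi> c1 c2 b X $ 1 = 0 \<and> iso_cong \<phi> c1 c2 b X $ 2 = 0"
      proof
        fix X assume "X \<in> ?S"
        then obtain i j where "X = F i j" "i \<le> m" "j \<le> n" by blast
        then show "iso_cong \<phi> c1 c2 b X $ 1 = 0 \<and> iso_cong \<phi> c1 c2 b X $ 2 = 0"
        proof -
          have "V i j = iso_cong \<phi> c1 c2 b (F i j)" "V i j $ 1 = 0 \<and> V i j $ 2 = 0" using tr vert \<open>i \<le> m\<close> \<open>j \<le> n\<close> by auto
          then show ?thesis using \<open>X = F i j\<close> by simp
        qed
      qed
      have F00: "F 0 0 \<in> ?S" by blast
      have vv: "\<forall>X\<in>?S. iso_cong \<phi> c1 c2 b X = vector [0, 0, c1 * X$1 + c2 * X$2 + b$3]"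
        by (rule vert_iso[OF ntc F00 vc])
      have "\<forall>X\<in>{G i j | i j. i \<le> m \<and> j \<le> n}. onp c1 c2 (b$3) X"
      proof
        fix X assume "X \<in> {G i j | i j. i \<le> m \<and> j \<le> n}"
        then obtain i j where X: "X = G i j" "i \<le> m" "j \<le> n" by blast
        have "V i j = vector [0, 0, c1 * F i j $ 1 + c2 * F i j $ 2 + b$3]"
        proof -
          have "V i j = iso_cong \<phi> c1 c2 b (F i j)" using tr X(2,3) by blast
          moreover have "F i j \<in> ?S" using X(2,3) by blast
          ultimately show ?thesis using vv by simp
        qed
        moreover have "G i j = vector [F i j $ 1, F i j $ 2, 0] + V i j" using Gd X(2,3) by blast
        ultimately show "onp c1 c2 (b$3) X" using X(1) by (simp add: onp_def)
      qed
      then have "coplanar {G i j | i j. i \<le> m \<and> j \<le> n}" by (rule onp_coplanar)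
      with ncp show False by simp
    qed
    show "velocity_diagram m n F G" unfolding velocity_diagram_def using inf nt vert Gd by blast
  qed
qed

end
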